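(* Let $l\ge1$ and $n\ge4l+2$. No equilateral $(2l+1)$-pointed star inscribed in $P_n$ has both a point that is a vertex of $P_n$ and a point that is the midpoint of an edge of $P_n$. Equivalently, no point of $P_n$ is both a vertex crossing and a midpoint crossing.
   Context: $P_n$ is the boundary of the regular polygon in $\mathbb{R}^2$ with vertices the $n$-th roots of unity, Euclidean metric $\|x-y\|$. $d_{P_n}(x,y)\in[0,1)$ is the counterclockwise arc length of $P_n$ from $x$ to $y$ divided by the perimeter. The directed Vietoris–Rips graph $\mathrm{VR}_<(P_n;r)$ has vertex set $P_n$ and, for distinct $u,w$ with $\|u-w\|<r$, the edge $u\to w$ if $d_{P_n}(u,w)<d_{P_n}(w,u)$, else $w\to u$; it is cyclic if whenever $u_0\to u_1$, every $w$ strictly counterclockwise-between them has $u_0\to w$ and $w\to u_1$. $r_n=\sup\{r\ge0:\mathrm{VR}_<(P_n;r')\text{ cyclic for all }0<r'<r\}$. For $0<r<r_n$, $g_r(p)$ is the first point $w$ met moving counterclockwise from $p$ with $\|p-w\|=r$, and $g_{r_n}=\lim_{r\to r_n}g_r$. An equilateral $(2l+1)$-pointed star of side $r\in(0,r_n]$ inscribed in $P_n$ is a cyclic sequence $u_0,\dots,u_{2l}$ with $u_{i+1}=g_r(u_i)$ (indices mod $2l+1$) and $\sum_{i}d_{P_n}(u_i,u_{i+1})=l$. For $n\ge4l+2$ each $p\in P_n$ lies on exactly one such star; $p$ is a vertex crossing (resp. midpoint crossing) if that star contains a vertex of $P_n$ (resp. a midpoint of an edge of $P_n$). *)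

theory Defs
  imports Complex_Main
begin

definition pvert :: "nat \<Rightarrow> int \<Rightarrow> complex" where
  "pvert n k = cis (2 * pi * real_of_int k / real n)"

text \<open>Normalized arc-length (counterclockwise) parametrization of the boundary P_n,
  1-periodic in t; since all edges have equal length, arc length / perimeter is
  proportional to the parameter on each edge.\<close>
definition pparam :: "nat \<Rightarrow> real \<Rightarrow> complex" where
  "pparam n t = (let s = frac t * real n; k = floor s; a = s - real_of_int k
                 in complex_of_real (1 - a) * pvert n k + complex_of_real a * pvert n (k + 1))"

definition polygon :: "nat \<Rightarrow> complex set" where
  "polygon n = pparam n ` {0..<1}"

definition ppos :: "nat \<Rightarrow> complex \<Rightarrow> real" where
  "ppos n x = (THE t. 0 \<le> t \<and> t < 1 \<and> pparam n t = x)"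

text \<open>d_{P_n}(x,y): counterclockwise arc length from x to y divided by the perimeter.\<close>
definition dP :: "nat \<Rightarrow> complex \<Rightarrow> complex \<Rightarrow> real" where
  "dP n x y = frac (ppos n y - ppos n x)"

definition vr_edge :: "nat \<Rightarrow> real \<Rightarrow> complex \<Rightarrow> complex \<Rightarrow> bool" where
  "vr_edge n r u w \<longleftrightarrow> u \<in> polygon n \<and> w \<in> polygon n \<and> u \<noteq> w \<and>
      norm (u - w) < r \<and> dP n u w \<le> dP n w u"

definition vr_cyclic :: "nat \<Rightarrow> real \<Rightarrow> bool" where
  "vr_cyclic n r \<longleftrightarrow> (\<forall>u0 u1 w. vr_edge n r u0 u1 \<longrightarrow> w \<in> polygon n \<longrightarrow>
      0 < dP n u0 w \<longrightarrow> dP n u0 w < dP n u0 u1 \<longrightarrow>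
      vr_edge n r u0 w \<and> vr_edge n r w u1)"

definition r_crit :: "nat \<Rightarrow> real" where
  "r_crit n = Sup {r. 0 \<le> r \<and> (\<forall>r'. 0 < r' \<and> r' < r \<longrightarrow> vr_cyclic n r')}"

definition g_map :: "nat \<Rightarrow> real \<Rightarrow> complex \<Rightarrow> complex" where
  "g_map n r p = pparam n (ppos n p +
      Inf {t. 0 < t \<and> t < 1 \<and> norm (p - pparam n (ppos n p + t)) = r})"

definition g_full :: "nat \<Rightarrow> real \<Rightarrow> complex \<Rightarrow> complex" where
  "g_full n r p = (if r < r_crit n then g_map n r p
                   else Lim (at_left (r_crit n)) (\<lambda>s. g_map n s p))"

definition is_star :: "nat \<Rightarrow> nat \<Rightarrow> real \<Rightarrow> (nat \<Rightarrow> complex) \<Rightarrow> bool" where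
  "is_star n l r u \<longleftrightarrow> 0 < r \<and> r \<le> r_crit n \<and>
      (\<forall>i < 2*l+1. u i \<in> polygon n \<and> u ((i + 1) mod (2*l+1)) = g_full n r (u i)) \<and>
      (\<Sum>i < 2*l+1. dP n (u i) (u ((i + 1) mod (2*l+1)))) = real l"

definition is_vertex :: "nat \<Rightarrow> complex \<Rightarrow> bool" where
  "is_vertex n x \<longleftrightarrow> (\<exists>k. x = pvert n k)"

definition is_edge_midpoint :: "nat \<Rightarrow> complex \<Rightarrow> bool" where
  "is_edge_midpoint n x \<longleftrightarrow> (\<exists>k. x = (pvert n k + pvert n (k + 1)) / 2)"

end

theory Submission
  imports Defs "HOL-Analysis.Analysis"
begin


definition Q :: "nat \<Rightarrow> real \<Rightarrow> complex" where
  "Q n s = complex_of_real (1 - (s - of_int \<lfloor>s\<rfloor>)) * pvert n \<lfloor>s\<rfloor> + complex_of_real (s - of_int \<lfloor>s\<rfloor>) * pvert n (\<lfloor>s\<rfloor> + 1)"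

lemma pvert_add_mult: assumes "n > 0" shows "pvert n (k + int n * m) = pvert n k"
proof -
  have "2 * pi * real_of_int (k + int n * m) / real n = 2 * pi * real_of_int k / real n + 2 * pi * real_of_int m"
    using assms by (simp add: field_simps)
  then show ?thesis unfolding pvert_def
    by (simp add: cis_mult[symmetric] cis_multiple_2pi[of "real_of_int m", simplified])
qed

lemma pvert_add: "pvert n (k + m) = cis (2 * pi * real_of_int m / real n) * pvert n k"
  unfolding pvert_def cis_mult by (simp add: add_divide_distrib algebra_simps)

lemma pvert_neg: "pvert n (- k) = cnj (pvert n k)"
  unfolding pvert_def cis_cnj by simp

lemma Q_int_add: assumes "0 \<le> a" "a \<le> 1"
  shows "Q n (of_int k + a) = complex_of_real (1 - a) * pvert n k + complex_of_real a * pvert n (k + 1)"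
proof (cases "a = 1")
  case True
  have "of_int k + a = of_int (k+1)" using True by simp
  moreover have "Q n (of_int (k+1)) = pvert n (k+1)" unfolding Q_def by simp
  ultimately show ?thesis using True by simp
next
  case False
  then have "a < 1" using assms by simp
  then have "\<lfloor>of_int k + a\<rfloor> = k" using assms by linarith
  then show ?thesis unfolding Q_def by simp
qed

lemma Q_eq: "Q n s = complex_of_real (1 - frac s) * pvert n \<lfloor>s\<rfloor> + complex_of_real (frac s) * pvert n (\<lfloor>s\<rfloor> + 1)"
  unfolding Q_def frac_def by simp

lemma Q_shift: "Q n (s + of_int m) = cis (2 * pi * real_of_int m / real n) * Q n s"
proof -
  have "\<lfloor>s + of_int m\<rfloor> = \<lfloor>s\<rfloor> + m" by simp
  moreover have "frac (s + of_int m) = frac s" by (simp add: frac_def)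
  moreover have "pvert n (\<lfloor>s\<rfloor> + m) = cis (2 * pi * real_of_int m / real n) * pvert n \<lfloor>s\<rfloor>"
    by (rule pvert_add)
  moreover have "pvert n (\<lfloor>s\<rfloor> + m + 1) = cis (2 * pi * real_of_int m / real n) * pvert n (\<lfloor>s\<rfloor> + 1)"
    using pvert_add[of n "\<lfloor>s\<rfloor> + 1" m] by (simp add: algebra_simps)
  ultimately show ?thesis unfolding Q_eq
    by (simp add: algebra_simps)
qed

lemma Q_periodic: assumes "n > 0" shows "Q n (s + of_int (int n * m)) = Q n s"
proof -
  have "2 * pi * real_of_int (int n * m) / real n = 2 * pi * real_of_int m" using assms by simp
  then show ?thesis unfolding Q_shift by (simp add: cis_multiple_2pi[of "real_of_int m", simplified])
qed

lemma Q_neg: "Q n (- s) = cnj (Q n s)"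
proof (cases "s \<in> \<int>")
  case True
  then obtain k where k: "s = of_int k" by (auto elim: Ints_cases)
  have "Q n (- s) = Q n (of_int (-k) + 0)" using k by simp
  also have "\<dots> = pvert n (-k)" by (subst Q_int_add) auto
  also have "\<dots> = cnj (pvert n k)" by (rule pvert_neg)
  also have "pvert n k = Q n (of_int k + 0)" by (subst Q_int_add) auto
  finally show ?thesis using k by simp
next
  case False
  define k where "k = \<lfloor>s\<rfloor>"
  define a where "a = frac s"
  have a: "0 < a" "a < 1" using False unfolding a_def by (auto simp: frac_lt_1 frac_gt_0_iff)
  have s: "s = of_int k + a" unfolding k_def a_def frac_def by simp
  have e: "- s = of_int (- k - 1) + (1 - a)" using s by simp
  have "Q n (of_int (- k - 1) + (1 - a)) = complex_of_real (1 - (1 - a)) * pvert n (- k - 1) + complex_of_real (1 - a) * pvert n (- k - 1 + 1)"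
    using a by (intro Q_int_add) auto
  then have "Q n (- s) = complex_of_real a * pvert n (- k - 1) + complex_of_real (1 - a) * pvert n (- k)"
    unfolding e by simp
  also have "\<dots> = cnj (complex_of_real a * pvert n (k + 1) + complex_of_real (1 - a) * pvert n k)"
    by (simp flip: pvert_neg)
  also have "\<dots> = cnj (Q n s)"
  proof -
    have "Q n s = complex_of_real (1 - a) * pvert n k + complex_of_real a * pvert n (k + 1)"
      unfolding s using a by (intro Q_int_add) auto
    then show ?thesis by simp
  qed
  finally show ?thesis .
qed

lemma pparam_Q: assumes "n > 0" shows "pparam n t = Q n (real n * t)"
proof -
  have "frac t * real n = real n * t + of_int (int n * (- \<lfloor>t\<rfloor>))"
    by (simp add: frac_def algebra_simps)
  then have "pparam n t = Q n (real n * t + of_int (int n * (- \<lfloor>t\<rfloor>)))"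
    unfolding pparam_def Q_def Let_def by simp
  also have "\<dots> = Q n (real n * t)" using assms by (rule Q_periodic)
  finally show ?thesis .
qed


lemma Q_cont_on_piece: "continuous_on {of_int k .. of_int k + 1} (Q n)"
proof -
  have *: "continuous_on {of_int k .. of_int k + 1}
     (\<lambda>s. complex_of_real (1 - (s - of_int k)) * pvert n k + complex_of_real (s - of_int k) * pvert n (k + 1))"
    by (intro continuous_intros)
  moreover have **: "\<And>s. s \<in> {of_int k .. of_int k + 1} \<Longrightarrow>
     Q n s = complex_of_real (1 - (s - of_int k)) * pvert n k + complex_of_real (s - of_int k) * pvert n (k + 1)"
  proof -
    fix s :: real assume "s \<in> {of_int k .. of_int k + 1}"
    then show "Q n s = complex_of_real (1 - (s - of_int k)) * pvert n k + complex_of_real (s - of_int k) * pvert n (k + 1)"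
      using Q_int_add[of "s - of_int k" n k] by simp
  qed
  show ?thesis by (rule continuous_on_eq[OF *]) (use ** in simp)
qed

lemma isCont_Q: "isCont (Q n) s"
proof -
  define k where "k = \<lfloor>s\<rfloor>"
  have "continuous_on {of_int (k - 1) .. of_int (k - 1) + 1} (Q n)" by (rule Q_cont_on_piece)
  moreover have "continuous_on {of_int k .. of_int k + 1} (Q n)" by (rule Q_cont_on_piece)
  ultimately have "continuous_on ({of_int (k - 1) .. of_int (k - 1) + 1} \<union> {of_int k .. of_int k + 1}) (Q n)"
    by (intro continuous_on_closed_Un) auto
  moreover have "{of_int (k - 1) .. of_int (k - 1) + 1} \<union> {of_int k .. of_int k + 1} = {of_int k - 1 .. of_int k + (1::real)}"
    by auto
  ultimately have "continuous_on {of_int k - 1 <..< of_int k + (1::real)} (Q n)"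
    by (elim continuous_on_subset) auto
  moreover have "s \<in> {of_int k - 1 <..< of_int k + (1::real)}"
  proof -
    have "of_int k \<le> s" "s < of_int k + 1" unfolding k_def by (rule of_int_floor_le) (rule real_of_int_floor_add_one_gt)
    then show ?thesis by simp
  qed
  ultimately show ?thesis by (simp add: continuous_on_eq_continuous_at)
qed

lemma isCont_pparam: assumes "n > 0" shows "isCont (pparam n) t"
proof -
  have "isCont (\<lambda>t. Q n (real n * t)) t"
    by (rule isCont_o2[OF _ isCont_Q]) (intro continuous_intros)
  moreover have "pparam n = (\<lambda>t. Q n (real n * t))" using pparam_Q[OF assms] by auto
  ultimately show ?thesis by simp
qed

lemma continuous_on_pparam: assumes "n > 0" shows "continuous_on S (pparam n)"
  using isCont_pparam[OF assms] by (simp add: continuous_at_imp_continuous_on)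

lemma pparam_periodic: assumes "n > 0" shows "pparam n (t + of_int m) = pparam n t"
proof -
  have e: "real n * (t + of_int m) = real n * t + of_int (int n * m)" by (simp add: algebra_simps)
  show ?thesis unfolding pparam_Q[OF assms] e by (rule Q_periodic[OF assms])
qed

lemma pparam_frac: assumes "n > 0" shows "pparam n (frac t) = pparam n t"
  using pparam_periodic[OF assms, of "frac t" "\<lfloor>t\<rfloor>"] by (simp add: frac_def)

lemma cos_lt_cos_pi_n:
  assumes "3 \<le> n" "2 \<le> i" "i \<le> int n - 1"
  shows "cos (pi * real_of_int (2 * i - 1) / real n) < cos (pi / real n)"
proof -
  define th where "th = pi * real_of_int (2 * i - 1) / real n"
  have n0: "real n > 0" using assms by simp
  have a: "pi / real n < th"
  proof -
    have "real_of_int (2 * i - 1) > 1" using assms by simp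
    then have "pi * 1 < pi * real_of_int (2 * i - 1)" by (intro mult_strict_left_mono) auto
    then show ?thesis unfolding th_def using n0 by (simp add: divide_strict_right_mono)
  qed
  have b: "th < 2 * pi - pi / real n"
  proof -
    have "real_of_int (2 * i - 1) < 2 * real n - 1" using assms by simp
    then have "pi * real_of_int (2 * i - 1) < pi * (2 * real n - 1)" by (intro mult_strict_left_mono) auto
    then have "th < pi * (2 * real n - 1) / real n" unfolding th_def using n0 by (simp add: divide_strict_right_mono)
    also have "\<dots> = 2 * pi - pi / real n" using n0 by (simp add: field_simps)
    finally show ?thesis .
  qed
  have pn: "0 \<le> pi / real n" by simp
  show ?thesis
  proof (cases "th \<le> pi")
    case True
    then show ?thesis using cos_monotone_0_pi[OF pn a True] unfolding th_def by simp
  next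
    case False
    have "cos th = cos (2 * pi - th)" by simp
    also have "\<dots> < cos (pi / real n)"
      by (rule cos_monotone_0_pi[OF pn]) (use b False in auto)
    finally show ?thesis unfolding th_def .
  qed
qed

definition phi :: "nat \<Rightarrow> complex \<Rightarrow> real" where
  "phi n z = Re (cnj (cis (pi / real n)) * z)"

lemma phi_pvert: "phi n (pvert n i) = cos (pi * real_of_int (2 * i - 1) / real n)"
proof -
  have "cnj (cis (pi / real n)) * pvert n i = cis (2 * pi * real_of_int i / real n - pi / real n)"
    unfolding pvert_def cis_cnj cis_mult by (simp add: algebra_simps)
  moreover have "2 * pi * real_of_int i / real n - pi / real n = pi * real_of_int (2 * i - 1) / real n"
    by (simp add: algebra_simps diff_divide_distrib)
  ultimately show ?thesis unfolding phi_def by simp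
qed

lemma phi_lin: "phi n (complex_of_real a * z + complex_of_real b * w) = a * phi n z + b * phi n w"
  unfolding phi_def by (simp add: algebra_simps)

lemma pvert_le: assumes "3 \<le> n" "0 \<le> i" "i \<le> int n" shows "phi n (pvert n i) \<le> cos (pi / real n)"
proof -
  consider "i = 0" | "i = 1" | "i = int n" | "2 \<le> i \<and> i \<le> int n - 1" using assms by linarith
  then show ?thesis
  proof cases
    case 1 then show ?thesis by (simp add: phi_pvert)
  next
    case 2 then show ?thesis by (simp add: phi_pvert)
  next
    case 3
    have "pvert n (int n) = pvert n (0 + int n * 1)" by simp
    also have "\<dots> = pvert n 0" using assms by (intro pvert_add_mult) auto
    finally have "phi n (pvert n (int n)) = phi n (pvert n 0)" by simp
    then show ?thesis using 3 by (simp add: phi_pvert[of n 0])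
  next
    case 4 then show ?thesis using cos_lt_cos_pi_n[OF assms(1)] by (simp add: phi_pvert less_imp_le)
  qed
qed

lemma pvert_0_1_neq: assumes "2 \<le> n" shows "pvert n 1 \<noteq> pvert n 0"
proof
  assume "pvert n 1 = pvert n 0"
  then have "Re (cis (2 * pi / real n)) = Re (cis 0)" unfolding pvert_def by simp
  then have "cos (2 * pi / real n) = 1" by simp
  moreover have "cos (2 * pi / real n) < cos 0"
  proof (rule cos_monotone_0_pi)
    show "0 < 2 * pi / real n" using assms by simp
    have "2 * pi / real n \<le> 2 * pi / 2" using assms by (intro divide_left_mono) auto
    then show "2 * pi / real n \<le> pi" by simp
  qed simp
  ultimately show False by simp
qed

lemma Q_base_inj:
  assumes n: "3 \<le> n" and s: "0 \<le> s" "s < 1" and s': "0 \<le> s'" "s' < real n" and eq: "Q n s = Q n s'"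
  shows "s = s'"
proof -
  define c where "c = cos (pi / real n)"
  have Qs: "Q n s = complex_of_real (1 - s) * pvert n 0 + complex_of_real s * pvert n 1"
    using Q_int_add[of s n 0] s by simp
  have phis: "phi n (Q n s) = c" unfolding Qs phi_lin phi_pvert c_def by (simp add: algebra_simps)
  define i where "i = \<lfloor>s'\<rfloor>"
  define b where "b = frac s'"
  have b: "0 \<le> b" "b < 1" unfolding b_def by (auto simp: frac_lt_1)
  have i: "0 \<le> i" "i \<le> int n - 1" unfolding i_def using s' by linarith+
  have s'eq: "s' = of_int i + b" unfolding i_def b_def frac_def by simp
  have Qs': "Q n s' = complex_of_real (1 - b) * pvert n i + complex_of_real b * pvert n (i + 1)"
    unfolding s'eq using b by (intro Q_int_add) auto
  have V10: "pvert n 1 - pvert n 0 \<noteq> 0" using pvert_0_1_neq[of n] n by simp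
  consider "i = 0" | "i = 1" | "2 \<le> i" using i by linarith
  then show ?thesis
  proof cases
    case 1
    have "complex_of_real (b - s) * (pvert n 1 - pvert n 0) = 0"
      using eq unfolding Qs Qs' 1 by (simp add: algebra_simps)
    then have "b = s" using V10 by simp
    then show ?thesis using s'eq 1 by simp
  next
    case 2
    have "phi n (pvert n 2) < c" unfolding c_def phi_pvert using cos_lt_cos_pi_n[of n 2] n by simp
    moreover have "phi n (Q n s') = (1 - b) * c + b * phi n (pvert n 2)"
      unfolding Qs' 2 phi_lin c_def by (simp add: phi_pvert)
    ultimately have "b * phi n (pvert n 2) = b * c" using phis eq by (simp add: algebra_simps)
    then have "b = 0" using \<open>phi n (pvert n 2) < c\<close> by simp
    then have "Q n s' = pvert n 1" unfolding Qs' 2 by simp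
    then have "complex_of_real (1 - s) * (pvert n 1 - pvert n 0) = 0"
      using eq unfolding Qs by (simp add: algebra_simps)
    then have "s = 1" using V10 by simp
    then show ?thesis using s by simp
  next
    case 3
    have l1: "phi n (pvert n i) < c" unfolding c_def phi_pvert using cos_lt_cos_pi_n[of n i] n 3 i by simp
    have l2: "phi n (pvert n (i + 1)) \<le> c" unfolding c_def using pvert_le[of n "i + 1"] n 3 i by simp
    have "phi n (Q n s') = (1 - b) * phi n (pvert n i) + b * phi n (pvert n (i + 1))"
      unfolding Qs' phi_lin by simp
    also have "\<dots> < (1 - b) * c + b * c"
    proof -
      have "(1 - b) * phi n (pvert n i) < (1 - b) * c" using l1 b by (intro mult_strict_left_mono) auto
      moreover have "b * phi n (pvert n (i + 1)) \<le> b * c" using l2 b by (intro mult_left_mono) auto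
      ultimately show ?thesis by linarith
    qed
    finally show ?thesis using phis eq by (simp add: algebra_simps)
  qed
qed


lemma frac_shift: "frac (x + of_int m) = frac x" by (simp add: frac_def)

lemma Q_inj:
  assumes n: "3 \<le> n" and s: "0 \<le> s" "s < real n" and s': "0 \<le> s'" "s' < real n" and eq: "Q n s = Q n s'"
  shows "s = s'"
proof -
  define k where "k = \<lfloor>s\<rfloor>"
  have k: "0 \<le> k" "k \<le> int n - 1" unfolding k_def using s by linarith+
  have sk: "0 \<le> s - of_int k" "s - of_int k < 1" unfolding k_def by linarith+
  have e1: "Q n (s - of_int k) = cis (2 * pi * real_of_int (- k) / real n) * Q n s"
    using Q_shift[of n s "- k"] by simp
  have e2: "Q n (s' - of_int k) = cis (2 * pi * real_of_int (- k) / real n) * Q n s'"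
    using Q_shift[of n s' "- k"] by simp
  have eq2: "Q n (s - of_int k) = Q n (s' - of_int k)" using e1 e2 eq by simp
  show ?thesis
  proof (cases "0 \<le> s' - of_int k")
    case True
    have "s - of_int k = s' - of_int k"
      by (rule Q_base_inj[OF n sk]) (use True s' eq2 k in auto)
    then show ?thesis by simp
  next
    case False
    have p: "Q n (s' - of_int k + of_int (int n * 1)) = Q n (s' - of_int k)"
      using n by (intro Q_periodic) auto
    have "s - of_int k = s' - of_int k + of_int (int n * 1)"
      by (rule Q_base_inj[OF n sk]) (use False s' eq2 k p in auto)
    then show ?thesis using False s' k sk by simp
  qed
qed

lemma pparam_inj:
  assumes n: "3 \<le> n" and "0 \<le> s" "s < 1" "0 \<le> t" "t < 1" "pparam n s = pparam n t"
  shows "s = t"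
proof -
  have n0: "n > 0" using n by simp
  have "Q n (real n * s) = Q n (real n * t)" using assms(6) by (simp add: pparam_Q[OF n0])
  moreover have "0 \<le> real n * s" "real n * s < real n" "0 \<le> real n * t" "real n * t < real n"
    using assms n0 by auto
  ultimately have "real n * s = real n * t" using Q_inj[OF n] by blast
  then show ?thesis using n0 by simp
qed

lemma ppos_pparam: assumes n: "3 \<le> n" shows "ppos n (pparam n t) = frac t"
  unfolding ppos_def
proof (rule the_equality)
  show "0 \<le> frac t \<and> frac t < 1 \<and> pparam n (frac t) = pparam n t"
    using n by (simp add: frac_lt_1 pparam_frac)
  fix u assume "0 \<le> u \<and> u < 1 \<and> pparam n u = pparam n t"
  then show "u = frac t" using pparam_inj[OF n, of u "frac t"] n by (simp add: frac_lt_1 pparam_frac)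
qed

lemma pparam_in_polygon: assumes "n > 0" shows "pparam n t \<in> polygon n"
  unfolding polygon_def using pparam_frac[OF assms, of t] frac_lt_1[of t] frac_ge_0[of t]
  by (metis atLeastLessThan_iff image_eqI)

lemma polygon_cases: assumes "p \<in> polygon n" obtains t where "0 \<le> t" "t < 1" "p = pparam n t"
  using assms unfolding polygon_def by auto

lemma pparam_ppos: assumes n: "3 \<le> n" and p: "p \<in> polygon n"
  shows "pparam n (ppos n p) = p" "0 \<le> ppos n p" "ppos n p < 1"
proof -
  obtain t where t: "0 \<le> t" "t < 1" "p = pparam n t" using polygon_cases[OF p] by blast
  have "ppos n p = t" using ppos_pparam[OF n, of t] t by (simp add: frac_eq)
  then show "pparam n (ppos n p) = p" "0 \<le> ppos n p" "ppos n p < 1" using t by auto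
qed

lemma dP_pparam: assumes n: "3 \<le> n" shows "dP n (pparam n x) (pparam n y) = frac (y - x)"
proof -
  have e: "frac y - frac x = (y - x) + of_int (\<lfloor>x\<rfloor> - \<lfloor>y\<rfloor>)" by (simp add: frac_def)
  have "dP n (pparam n x) (pparam n y) = frac (frac y - frac x)" by (simp add: dP_def ppos_pparam[OF n])
  also have "\<dots> = frac ((y - x) + of_int (\<lfloor>x\<rfloor> - \<lfloor>y\<rfloor>))" by (simp only: e)
  also have "\<dots> = frac (y - x)" by (rule frac_shift)
  finally show ?thesis .
qed

definition D :: "nat \<Rightarrow> real \<Rightarrow> real \<Rightarrow> real" where
  "D n x y = cmod (pparam n x - pparam n y)"

lemma D_sym: "D n x y = D n y x" unfolding D_def by (simp add: norm_minus_commute)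

lemma D_periodic1: "n > 0 \<Longrightarrow> D n (x + of_int m) y = D n x y" unfolding D_def by (simp add: pparam_periodic)
lemma D_periodic2: "n > 0 \<Longrightarrow> D n x (y + of_int m) = D n x y" unfolding D_def by (simp add: pparam_periodic)

lemma D_nonneg: "0 \<le> D n x y" unfolding D_def by simp
lemma D_self: "D n x x = 0" unfolding D_def by simp

lemma pparam_rot: assumes n: "n > 0" and c: "real n * c = of_int m"
  shows "pparam n (c + t) = cis (2 * pi * real_of_int m / real n) * pparam n t"
proof -
  have "real n * (c + t) = real n * t + of_int m" using c by (simp add: algebra_simps)
  then show ?thesis unfolding pparam_Q[OF n] by (simp add: Q_shift)
qed

lemma pparam_refl: assumes n: "n > 0" and c: "real n * c = of_int m"
  shows "pparam n (c - t) = cis (2 * pi * real_of_int m / real n) * cnj (pparam n t)"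
proof -
  have e: "real n * (c - t) = - (real n * t) + of_int m" using c by (simp add: algebra_simps)
  show ?thesis unfolding pparam_Q[OF n] e Q_shift Q_neg by simp
qed

lemma D_rot: assumes n: "n > 0" and c: "real n * c = of_int m"
  shows "D n (c + x) (c + y) = D n x y"
proof -
  have "pparam n (c + x) - pparam n (c + y) = cis (2 * pi * real_of_int m / real n) * (pparam n x - pparam n y)"
    unfolding pparam_rot[OF n c] by (simp add: algebra_simps)
  then show ?thesis unfolding D_def by (simp add: norm_mult)
qed

lemma D_refl: assumes n: "n > 0" and c: "real n * c = of_int m"
  shows "D n (c - x) (c - y) = D n x y"
proof -
  have "pparam n (c - x) - pparam n (c - y) = cis (2 * pi * real_of_int m / real n) * cnj (pparam n x - pparam n y)"
    unfolding pparam_refl[OF n c] by (simp add: algebra_simps)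
  then show ?thesis unfolding D_def
    by (simp add: norm_mult complex_cnj_diff[symmetric] del: complex_cnj_diff)
qed

lemma cont_D: assumes n: "n > 0" and f: "continuous_on S f" and g: "continuous_on S g"
  shows "continuous_on S (\<lambda>t. D n (f t) (g t))"
proof -
  have pf: "continuous_on S (\<lambda>t. pparam n (f t))"
    using continuous_on_compose[OF f continuous_on_pparam[OF n]] by (simp add: o_def)
  have pg: "continuous_on S (\<lambda>t. pparam n (g t))"
    using continuous_on_compose[OF g continuous_on_pparam[OF n]] by (simp add: o_def)
  show ?thesis unfolding D_def by (intro continuous_intros pf pg)
qed

lemma D_pos: assumes n: "3 \<le> n" and "frac x \<noteq> frac y" shows "0 < D n x y"
proof -
  have "pparam n x \<noteq> pparam n y"
  proof
    assume "pparam n x = pparam n y"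
    then have "pparam n (frac x) = pparam n (frac y)" using n by (simp add: pparam_frac)
    then have "frac x = frac y" using pparam_inj[OF n] by (simp add: frac_lt_1)
    then show False using assms by simp
  qed
  then show ?thesis unfolding D_def by simp
qed


lemma cyc_below: assumes "0 < r'" "r' < r_crit n" shows "vr_cyclic n r'"
proof -
  let ?S = "{r. 0 \<le> r \<and> (\<forall>r'. 0 < r' \<and> r' < r \<longrightarrow> vr_cyclic n r')}"
  have "0 \<in> ?S" by auto
  then have "?S \<noteq> {}" by blast
  from less_cSupD[OF this] assms(2) obtain s where "s \<in> ?S" "r' < s" unfolding r_crit_def by blast
  then show ?thesis using assms(1) by blast
qed

lemma frac_neg_small: assumes "0 < t" "t < 1" shows "frac (- t) = 1 - t"
proof -
  have "\<lfloor>- t\<rfloor> = -1" using assms by (simp add: floor_eq_iff)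
  then show ?thesis by (simp add: frac_def)
qed

lemma frac_small: assumes "0 \<le> t" "t < 1" shows "frac t = t"
  using assms by (simp add: frac_eq)

lemma pparam_neq: assumes n: "3 \<le> n" and t: "0 < t" "t < 1" shows "pparam n x \<noteq> pparam n (x + t)"
proof
  assume "pparam n x = pparam n (x + t)"
  then have "pparam n (frac x) = pparam n (frac (x + t))" using n by (simp add: pparam_frac)
  then have e: "frac x = frac (x + t)" using pparam_inj[OF n] by (simp add: frac_lt_1)
  have "t = of_int (\<lfloor>x + t\<rfloor> - \<lfloor>x\<rfloor>)" using e by (simp add: frac_def)
  then obtain k :: int where "t = of_int k" by blast
  with t show False by (cases "k \<le> 0") (auto, linarith?)
qed

lemma D_pos': assumes n: "3 \<le> n" and t: "0 < t" "t < 1" shows "0 < D n x (x + t)"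
  using pparam_neq[OF n t, of x] unfolding D_def by simp

lemma P1:
  assumes n: "3 \<le> n" and d: "D n x (x + t) < R" and R: "R \<le> r_crit n"
    and t: "0 < t" "t \<le> 1/2" and s: "0 < s" "s < t"
  shows "D n x (x + s) \<le> D n x (x + t) \<and> D n (x + s) (x + t) \<le> D n x (x + t)"
proof -
  have n0: "n > 0" using n by simp
  define d where "d = D n x (x + t)"
  have key: "D n x (x + s) < r' \<and> D n (x + s) (x + t) < r'" if r': "d < r'" "r' < R" for r'
  proof -
    have "0 \<le> d" unfolding d_def by (rule D_nonneg)
    then have "0 < r'" using r' by simp
    then have cyc: "vr_cyclic n r'" using cyc_below r' R by simp
    let ?u0 = "pparam n x" and ?u1 = "pparam n (x + t)" and ?w = "pparam n (x + s)"
    have dp1: "dP n ?u0 ?u1 = t" using t by (simp add: dP_pparam[OF n] frac_small)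
    have dp2: "dP n ?u1 ?u0 = 1 - t" using t by (simp add: dP_pparam[OF n] frac_neg_small)
    have dp3: "dP n ?u0 ?w = s" using s t by (simp add: dP_pparam[OF n] frac_small)
    have edge: "vr_edge n r' ?u0 ?u1"
      unfolding vr_edge_def using pparam_in_polygon[OF n0] pparam_neq[OF n, of t x] t r' dp1 dp2
      by (auto simp: d_def D_def)
    have "vr_edge n r' ?u0 ?w \<and> vr_edge n r' ?w ?u1"
      using cyc[unfolded vr_cyclic_def, rule_format, OF edge pparam_in_polygon[OF n0]] dp1 dp3 s
      by simp
    then show ?thesis unfolding vr_edge_def D_def by simp
  qed
  have A: "D n x (x + s) \<le> d"
  proof (rule ccontr)
    assume "\<not> ?thesis"
    then have "d < D n x (x + s)" by simp
    define r' where "r' = min ((d + D n x (x + s)) / 2) ((d + R) / 2)"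
    have "d < r'" "r' < R" "r' < D n x (x + s)" using \<open>d < D n x (x + s)\<close> d unfolding r'_def d_def by (auto simp: min_def)
    then show False using key by force
  qed
  have B: "D n (x + s) (x + t) \<le> d"
  proof (rule ccontr)
    assume "\<not> ?thesis"
    then have "d < D n (x + s) (x + t)" by simp
    define r' where "r' = min ((d + D n (x + s) (x + t)) / 2) ((d + R) / 2)"
    have "d < r'" "r' < R" "r' < D n (x + s) (x + t)" using \<open>d < D n (x + s) (x + t)\<close> d unfolding r'_def d_def by (auto simp: min_def)
    then show False using key by force
  qed
  show ?thesis using A B unfolding d_def by simp
qed


definition Bn :: "nat \<Rightarrow> real" where
  "Bn n = (if even n then 2 * cos (pi / real n) else 1 + cos (pi / real n))"

lemma cos_pi_n_pos: assumes "3 \<le> n" shows "0 < cos (pi / real n)"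
proof (rule cos_gt_zero_pi)
  have "pi / real n \<le> pi / 3" using assms by (intro divide_left_mono) auto
  also have "\<dots> < pi / 2" by simp
  finally show "pi / real n < pi / 2" .
  have "0 \<le> pi / real n" by simp
  then show "- (pi / 2) < pi / real n" using pi_gt_zero by linarith
qed

lemma sin_pi_n_pos: assumes "3 \<le> n" shows "0 < sin (pi / real n)"
proof (rule sin_gt_zero)
  show "0 < pi / real n" using assms by simp
  have "pi / real n \<le> pi / 3" using assms by (intro divide_left_mono) auto
  also have "\<dots> < pi" by simp
  finally show "pi / real n < pi" .
qed

lemma phi_Q01: assumes "0 \<le> a" "a \<le> 1" shows "phi n (Q n a) = cos (pi / real n)"
proof -
  have e: "Q n a = complex_of_real (1 - a) * pvert n 0 + complex_of_real a * pvert n 1"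
    using Q_int_add[of a n 0] assms by simp
  show ?thesis unfolding e phi_lin phi_pvert by (simp add: algebra_simps)
qed

lemma phi_diff: "phi n (a - b) = phi n a - phi n b" unfolding phi_def by (simp add: algebra_simps)

lemma phi_le_norm: "phi n w \<le> cmod w"
proof -
  have "phi n w \<le> cmod (cnj (cis (pi / real n)) * w)" unfolding phi_def by (rule complex_Re_le_cmod)
  also have "\<dots> = cmod w" by (simp add: norm_mult)
  finally show ?thesis .
qed

lemma far_point: assumes n: "3 \<le> n" shows "\<exists>z. Bn n \<le> D n x z"
proof -
  have n0: "n > 0" using n by simp
  define s where "s = real n * x"
  define k where "k = \<lfloor>s\<rfloor>"
  define a where "a = frac s"
  have a: "0 \<le> a" "a \<le> 1" unfolding a_def by (auto simp: frac_lt_1 less_imp_le)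
  have s: "s = a + of_int k" unfolding a_def k_def frac_def by simp
  define i :: int where "i = (if even n then int (n div 2) else int ((n + 1) div 2))"
  define z where "z = (of_int k + of_int i) / real n"
  have px: "pparam n x = cis (2 * pi * real_of_int k / real n) * Q n a"
    unfolding pparam_Q[OF n0] s_def[symmetric] s by (rule Q_shift)
  have "pparam n z = Q n (of_int (i + k) + 0)" unfolding pparam_Q[OF n0] z_def using n0 by (simp add: add.commute)
  also have "\<dots> = pvert n (i + k)" by (subst Q_int_add) auto
  also have "\<dots> = cis (2 * pi * real_of_int k / real n) * pvert n i" by (rule pvert_add)
  finally have pz: "pparam n z = cis (2 * pi * real_of_int k / real n) * pvert n i" .
  have Dz: "D n x z = cmod (Q n a - pvert n i)"
  proof -
    have "pparam n x - pparam n z = cis (2 * pi * real_of_int k / real n) * (Q n a - pvert n i)"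
      unfolding px pz by (simp add: algebra_simps)
    then show ?thesis unfolding D_def by (simp add: norm_mult)
  qed
  have "phi n (pvert n i) = (if even n then - cos (pi / real n) else -1)"
  proof (cases "even n")
    case True
    then obtain m where m: "n = 2 * m" by blast
    have "real_of_int (2 * i - 1) = real n - 1" using True m unfolding i_def by simp
    moreover have "pi * (real n - 1) / real n = pi - pi / real n" using n0 by (simp add: diff_divide_distrib right_diff_distrib)
    ultimately have "pi * real_of_int (2 * i - 1) / real n = pi - pi / real n" by simp
    then show ?thesis using True by (simp add: phi_pvert)
  next
    case False
    then obtain m where m: "n = 2 * m + 1" using oddE by blast
    have "real_of_int (2 * i - 1) = real n" using False m unfolding i_def by simp
    then have "pi * real_of_int (2 * i - 1) / real n = pi" using n0 by simp
    then show ?thesis using False by (simp add: phi_pvert)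
  qed
  then have "Bn n = phi n (Q n a - pvert n i)"
    unfolding phi_diff phi_Q01[OF a] Bn_def by simp
  also have "\<dots> \<le> D n x z" unfolding Dz by (rule phi_le_norm)
  finally show ?thesis by blast
qed


lemma fail_config:
  assumes n: "3 \<le> n" and sg: "0 < sg" "sg < 1/2"
    and h1: "D n x0 (x0 + 1/2) = Bn n" and h2: "Bn n < D n x0 (x0 + sg)"
  shows "r_crit n \<le> Bn n"
proof (rule ccontr)
  assume "\<not> ?thesis"
  then have lt: "Bn n < r_crit n" by simp
  have n0: "n > 0" using n by simp
  define r' where "r' = (Bn n + min (r_crit n) (D n x0 (x0 + sg))) / 2"
  have r': "Bn n < r'" "r' < r_crit n" "r' < D n x0 (x0 + sg)"
    using lt h2 unfolding r'_def by (auto simp: min_def)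
  have "0 \<le> Bn n" using h1 D_nonneg by metis
  then have "0 < r'" using r' by simp
  then have cyc: "vr_cyclic n r'" using cyc_below r' by simp
  let ?u0 = "pparam n x0" and ?u1 = "pparam n (x0 + 1/2)" and ?w = "pparam n (x0 + sg)"
  have dp1: "dP n ?u0 ?u1 = 1/2" by (simp add: dP_pparam[OF n] frac_small)
  have dp2: "dP n ?u1 ?u0 = 1/2" using frac_neg_small[of "1/2"] by (simp add: dP_pparam[OF n])
  have dp3: "dP n ?u0 ?w = sg" using sg by (simp add: dP_pparam[OF n] frac_small)
  have edge: "vr_edge n r' ?u0 ?u1"
    unfolding vr_edge_def using pparam_in_polygon[OF n0] pparam_neq[OF n, of "1/2" x0] r' dp1 dp2 h1
    by (auto simp: D_def)
  have "vr_edge n r' ?u0 ?w"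
    using cyc[unfolded vr_cyclic_def, rule_format, OF edge pparam_in_polygon[OF n0]] dp1 dp3 sg
    by simp
  then have "D n x0 (x0 + sg) < r'" unfolding vr_edge_def D_def by simp
  then show False using r' by simp
qed

lemma cmod_sq_less: assumes "0 \<le> b" "b\<^sup>2 < (cmod z)\<^sup>2" shows "b < cmod z"
  using assms by (meson norm_ge_zero not_le power_mono)

lemma cmod_sq_eq: assumes "0 \<le> b" "(cmod z)\<^sup>2 = b\<^sup>2" shows "cmod z = b"
  using assms by simp

lemma r_crit_le: assumes n: "3 \<le> n" shows "r_crit n \<le> Bn n"
proof -
  have n0: "n > 0" using n by simp
  define c where "c = cos (pi / real n)"
  define sn where "sn = sin (pi / real n)"
  have c0: "0 < c" unfolding c_def by (rule cos_pi_n_pos[OF n])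
  have s0: "0 < sn" unfolding sn_def by (rule sin_pi_n_pos[OF n])
  have cs: "c\<^sup>2 + sn\<^sup>2 = 1" unfolding c_def sn_def by simp
  show ?thesis
  proof (cases "even n")
    case True
    then obtain m where m: "n = 2 * m" by blast
    define w where "w = cis (2 * pi / real n)"
    have cw: "Re w = 2 * c\<^sup>2 - 1" unfolding w_def c_def
      using cos_double_cos[of "pi / real n"] by (simp add: mult.commute)
    have sw: "(Im w)\<^sup>2 = 1 - (Re w)\<^sup>2" unfolding w_def by (simp add: sin_squared_eq)
    have Vm: "pvert n (int m) = -1"
    proof -
      have "2 * pi * real_of_int (int m) / real n = pi" using m n0 by simp
      then show ?thesis unfolding pvert_def by simp
    qed
    have Vm1: "pvert n (int m + 1) = - w"
    proof -
      have "pvert n (int m + 1) = cis (2 * pi * real_of_int 1 / real n) * pvert n (int m)" by (rule pvert_add)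
      then show ?thesis using Vm unfolding w_def by simp
    qed
    have V1: "pvert n 1 = w" unfolding pvert_def w_def by simp
    have u0: "pparam n (1 / (2 * real n)) = (1 + w) / 2"
    proof -
      have "pparam n (1 / (2 * real n)) = Q n (of_int 0 + 1/2)" unfolding pparam_Q[OF n0] using n0 by simp
      also have "\<dots> = complex_of_real (1/2) * pvert n 0 + complex_of_real (1/2) * pvert n (0 + 1)"
        using Q_int_add[of "1/2" n 0] by simp
      finally show ?thesis using V1 by (simp add: pvert_def)
    qed
    have u1: "pparam n (1 / (2 * real n) + 1/2) = - (1 + w) / 2"
    proof -
      have "real n * (1 / (2 * real n) + 1/2) = of_int (int m) + 1/2" using m n0 by (simp add: field_simps)
      then have "pparam n (1 / (2 * real n) + 1/2) = Q n (of_int (int m) + 1/2)" unfolding pparam_Q[OF n0] by simp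
      also have "\<dots> = complex_of_real (1/2) * pvert n (int m) + complex_of_real (1/2) * pvert n (int m + 1)"
        using Q_int_add[of "1/2" n "int m"] by simp
      finally show ?thesis using Vm Vm1 by simp
    qed
    have ww: "pparam n (1 / (2 * real n) + (1/2 - 1 / (2 * real n))) = -1"
    proof -
      have "real n * (1/2) = of_int (int m) + 0" using m by simp
      then have "pparam n (1/2) = Q n (of_int (int m) + 0)" unfolding pparam_Q[OF n0] by simp
      also have "\<dots> = pvert n (int m)" by (subst Q_int_add) auto
      finally show ?thesis using Vm by simp
    qed
    have Bn: "Bn n = 2 * c" using True unfolding Bn_def c_def by simp
    have cwl: "Re w < 1"
    proof -
      have "cos (2 * pi / real n) < cos 0"
      proof (rule cos_monotone_0_pi)
        show "0 < 2 * pi / real n" using n0 by simp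
        have "2 * pi / real n \<le> 2 * pi / 3" using n by (intro divide_left_mono) auto
        also have "\<dots> \<le> pi" by simp
        finally show "2 * pi / real n \<le> pi" .
      qed simp
      then show ?thesis unfolding w_def by simp
    qed
    show ?thesis
    proof (rule fail_config[OF n, of "1/2 - 1 / (2 * real n)" "1 / (2 * real n)"])
      show "0 < 1/2 - 1 / (2 * real n)" using n by (simp add: field_simps)
      show "1/2 - 1 / (2 * real n) < 1/2" using n by simp
      have I2: "(Im w)\<^sup>2 = 1 - (2 * c\<^sup>2 - 1)\<^sup>2" using sw cw by simp
      have "(cmod (1 + w))\<^sup>2 = (1 + Re w)\<^sup>2 + (Im w)\<^sup>2" by (simp add: cmod_power2)
      also have "\<dots> = (2 * c\<^sup>2)\<^sup>2 + (1 - (2 * c\<^sup>2 - 1)\<^sup>2)" using cw I2 by simp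
      also have "\<dots> = (2 * c)\<^sup>2" by (simp add: power2_eq_square algebra_simps)
      finally have "(cmod (1 + w))\<^sup>2 = (2 * c)\<^sup>2" .
      then have "cmod (1 + w) = 2 * c" using c0 by (intro cmod_sq_eq) auto
      moreover have "(1 + w) / 2 - - (1 + w) / 2 = 1 + w" by (simp add: field_simps)
      ultimately show "D n (1 / (2 * real n)) (1 / (2 * real n) + 1/2) = Bn n"
        unfolding D_def u0 u1 Bn by simp
      have sw': "Im w * Im w = 1 - Re w * Re w" using sw by (simp add: power2_eq_square)
      have e1: "(cmod ((1 + w) / 2 - -1))\<^sup>2 = (10 + 6 * Re w) / 4"
        unfolding cmod_power2 using sw' by (simp add: power2_eq_square field_simps)
      have e2: "(2 * c)\<^sup>2 = 2 + 2 * Re w" using cw by (simp add: power2_eq_square)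
      have "(2 * c)\<^sup>2 < (cmod ((1 + w) / 2 - -1))\<^sup>2"
        unfolding e1 e2 using cwl by simp
      then show "Bn n < D n (1 / (2 * real n)) (1 / (2 * real n) + (1/2 - 1 / (2 * real n)))"
        unfolding D_def u0 ww Bn using c0 by (intro cmod_sq_less) auto
    qed
  next
    case False
    then obtain m where m: "n = 2 * m + 1" using oddE by blast
    have m1: "1 \<le> m" using m n by simp
    have Vm: "pvert n (int m) = complex_of_real (- c) + \<i> * complex_of_real sn"
    proof -
      have "2 * pi * real_of_int (int m) / real n = pi - pi / real n" using m n0 by (simp add: field_simps)
      then show ?thesis unfolding pvert_def c_def sn_def by (simp add: complex_eq_iff)
    qed
    have Vm1: "pvert n (int m + 1) = complex_of_real (- c) - \<i> * complex_of_real sn"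
    proof -
      have "2 * pi * real_of_int (int m + 1) / real n = pi + pi / real n" using m n0 by (simp add: field_simps)
      then show ?thesis unfolding pvert_def c_def sn_def by (simp add: complex_eq_iff)
    qed
    have u0: "pparam n 0 = 1"
    proof -
      have "pparam n 0 = Q n (of_int 0 + 0)" unfolding pparam_Q[OF n0] by simp
      also have "\<dots> = pvert n 0" by (subst Q_int_add) auto
      finally show ?thesis by (simp add: pvert_def)
    qed
    have u1: "pparam n (0 + 1/2) = complex_of_real (- c)"
    proof -
      have e: "real n * (0 + 1/2) = of_int (int m) + 1/2" using m by (simp add: field_simps)
      have "pparam n (0 + 1/2) = Q n (real n * (0 + 1/2))" by (rule pparam_Q[OF n0])
      also have "\<dots> = Q n (of_int (int m) + 1/2)" by (simp only: e)
      also have "\<dots> = complex_of_real (1/2) * pvert n (int m) + complex_of_real (1/2) * pvert n (int m + 1)"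
        using Q_int_add[of "1/2" n "int m"] by simp
      finally show ?thesis unfolding Vm Vm1 by (simp add: complex_eq_iff)
    qed
    have ww: "pparam n (0 + real m / real n) = pvert n (int m)"
    proof -
      have "pparam n (0 + real m / real n) = Q n (of_int (int m) + 0)" unfolding pparam_Q[OF n0] using n0 by simp
      also have "\<dots> = pvert n (int m)" by (subst Q_int_add) auto
      finally show ?thesis .
    qed
    have Bn: "Bn n = 1 + c" using False unfolding Bn_def c_def by simp
    show ?thesis
    proof (rule fail_config[OF n, of "real m / real n" 0])
      show "0 < real m / real n" using m1 n0 by simp
      show "real m / real n < 1/2" using m n0 by (simp add: field_simps)
      have "1 - complex_of_real (- c) = complex_of_real (1 + c)" by simp
      then show "D n 0 (0 + 1/2) = Bn n" unfolding D_def u0 u1 Bn using c0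
        by (simp only: norm_of_real)
      have "(1 + c)\<^sup>2 < (cmod (1 - pvert n (int m)))\<^sup>2"
        unfolding cmod_power2 Vm using s0 by (simp add: power2_eq_square algebra_simps)
      then show "Bn n < D n 0 (0 + real m / real n)"
        unfolding D_def u0 ww Bn using c0 by (intro cmod_sq_less) auto
    qed
  qed
qed


definition Fr :: "nat \<Rightarrow> real \<Rightarrow> real \<Rightarrow> real" where
  "Fr n r y = Inf {t. 0 < t \<and> t < 1 \<and> norm (pparam n y - pparam n (y + t)) = r}"

lemma cont_f: assumes "n > 0" shows "continuous_on S (\<lambda>t. D n x (x + t))"
  by (rule cont_D[OF assms]) (intro continuous_intros)+

lemma cont_k: assumes "n > 0" shows "continuous_on S (\<lambda>t. D n y (x + t))"
  by (rule cont_D[OF assms]) (intro continuous_intros)+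

lemma all_within:
  assumes n: "3 \<le> n" and d: "D n x (x + 1/2) < r_crit n"
  shows "D n x z \<le> D n x (x + 1/2)"
proof -
  have n0: "n > 0" using n by simp
  define s where "s = frac (z - x)"
  have s: "0 \<le> s" "s < 1" unfolding s_def by (auto simp: frac_lt_1)
  have "z = (x + s) + of_int \<lfloor>z - x\<rfloor>" unfolding s_def frac_def by simp
  then have Dz: "D n x z = D n x (x + s)" using D_periodic2[OF n0] by metis
  consider "s = 0" | "0 < s \<and> s < 1/2" | "s = 1/2" | "1/2 < s" using s by linarith
  then show ?thesis
  proof cases
    case 1 then show ?thesis unfolding Dz by (simp add: D_self D_nonneg)
  next
    case 2 then show ?thesis unfolding Dz using P1[OF n d order_refl, of s] by simp
  next
    case 3 then show ?thesis unfolding Dz 3 by simp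
  next
    case 4
    have e1: "D n (x + 1/2) (x + 1/2 + 1/2) = D n x (x + 1/2)"
    proof -
      have "x + 1/2 + 1/2 = x + of_int 1" by simp
      then have "D n (x + 1/2) (x + 1/2 + 1/2) = D n (x + 1/2) (x + of_int 1)" by (simp only:)
      also have "\<dots> = D n (x + 1/2) x" by (rule D_periodic2[OF n0])
      finally show ?thesis by (simp add: D_sym)
    qed
    have "D n (x + 1/2 + (s - 1/2)) (x + 1/2 + 1/2) \<le> D n (x + 1/2) (x + 1/2 + 1/2)"
      using P1[OF n _ order_refl, of "x + 1/2" "1/2" "s - 1/2"] e1 d 4 s by simp
    moreover have "D n (x + 1/2 + (s - 1/2)) (x + 1/2 + 1/2) = D n x (x + s)"
    proof -
      have "x + 1/2 + (s - 1/2) = x + s" "x + 1/2 + 1/2 = x + of_int 1" by simp_all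
      then have "D n (x + 1/2 + (s - 1/2)) (x + 1/2 + 1/2) = D n (x + s) (x + of_int 1)" by (simp only:)
      also have "\<dots> = D n (x + s) x" by (rule D_periodic2[OF n0])
      finally show ?thesis by (simp add: D_sym)
    qed
    ultimately show ?thesis unfolding Dz using e1 by simp
  qed
qed

lemma hit_exists:
  assumes n: "3 \<le> n" and r: "0 < r" "r \<le> r_crit n"
  shows "\<exists>t0. 0 < t0 \<and> t0 \<le> 1/2 \<and> D n x (x + t0) = r"
proof (cases "r \<le> D n x (x + 1/2)")
  case True
  have n0: "n > 0" using n by simp
  have "\<exists>t. 0 \<le> t \<and> t \<le> 1/2 \<and> D n x (x + t) = r"
    by (rule IVT'[of "\<lambda>t. D n x (x + t)"]) (use True r cont_f[OF n0] in \<open>auto simp: D_self\<close>)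
  then obtain t where t: "0 \<le> t" "t \<le> 1/2" "D n x (x + t) = r" by blast
  have "t \<noteq> 0" using t r by (auto simp: D_self)
  then show ?thesis by (intro exI[of _ t]) (use t in auto)
next
  case False
  then have d: "D n x (x + 1/2) < r_crit n" using r by simp
  obtain z where z: "Bn n \<le> D n x z" using far_point[OF n] by blast
  have "D n x z \<le> D n x (x + 1/2)" by (rule all_within[OF n d])
  then show ?thesis using z False r r_crit_le[OF n] by simp
qed

lemma parallelogram: "(cmod u)\<^sup>2 + (cmod v)\<^sup>2 = 2 * (cmod ((u + v) / 2))\<^sup>2 + (cmod (u - v))\<^sup>2 / 2"
  unfolding cmod_power2 by (simp add: power2_eq_square field_simps)

lemma not_const_dist:
  assumes n: "3 \<le> n" and ab: "a < b"
  shows "\<not> (\<forall>y. a < y \<and> y < b \<longrightarrow> cmod (pparam n y - P) = rho)"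
proof
  assume H: "\<forall>y. a < y \<and> y < b \<longrightarrow> cmod (pparam n y - P) = rho"
  have n0: "n > 0" and nr: "real n > 0" using n by auto
  define a1 where "a1 = (a + b) / 2"
  define k where "k = \<lfloor>real n * a1\<rfloor>"
  define e where "e = (of_int k + 1) / real n - a1"
  have k1: "of_int k \<le> real n * a1" "real n * a1 < of_int k + 1" unfolding k_def by linarith+
  have e0: "0 < e"
  proof -
    have "a1 < (of_int k + 1) / real n" using k1 nr by (simp add: field_simps)
    then show ?thesis unfolding e_def by simp
  qed
  define dl where "dl = min ((b - a) / 8) (e / 2)"
  have dl0: "0 < dl" unfolding dl_def using ab e0 by simp
  have dl1: "dl \<le> (b - a) / 8" "dl \<le> e / 2" unfolding dl_def by (rule min.cobounded1, rule min.cobounded2)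
  have pc: "pparam n y = complex_of_real (1 - (real n * y - of_int k)) * pvert n k
      + complex_of_real (real n * y - of_int k) * pvert n (k + 1)"
    if "a1 \<le> y" "y \<le> a1 + e" for y
  proof -
    have "0 \<le> real n * y - of_int k" using k1 that nr by (smt (verit) mult_left_mono of_nat_0_le_iff)
    moreover have "real n * y - of_int k \<le> 1"
    proof -
      have "real n * y \<le> real n * (a1 + e)" using that nr by (intro mult_left_mono) auto
      also have "real n * (a1 + e) = of_int k + 1" unfolding e_def using nr by (simp add: field_simps)
      finally show ?thesis by simp
    qed
    ultimately have "Q n (of_int k + (real n * y - of_int k)) = complex_of_real (1 - (real n * y - of_int k)) * pvert n k
      + complex_of_real (real n * y - of_int k) * pvert n (k + 1)" by (rule Q_int_add)
    then show ?thesis unfolding pparam_Q[OF n0] by simp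
  qed
  have p1: "pparam n a1 = complex_of_real (1 - (real n * a1 - of_int k)) * pvert n k
      + complex_of_real (real n * a1 - of_int k) * pvert n (k + 1)" using pc e0 by simp
  have p2: "pparam n (a1 + dl) = complex_of_real (1 - (real n * (a1 + dl) - of_int k)) * pvert n k
      + complex_of_real (real n * (a1 + dl) - of_int k) * pvert n (k + 1)" using pc dl0 dl1 e0 by simp
  have p3: "pparam n (a1 + 2 * dl) = complex_of_real (1 - (real n * (a1 + 2 * dl) - of_int k)) * pvert n k
      + complex_of_real (real n * (a1 + 2 * dl) - of_int k) * pvert n (k + 1)" using pc dl0 dl1 e0 by simp
  have mid: "pparam n (a1 + dl) = (pparam n a1 + pparam n (a1 + 2 * dl)) / 2"
    unfolding p1 p2 p3 by (simp add: algebra_simps)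
  have in1: "a < a1" "a1 < b" unfolding a1_def using ab by auto
  have h8: "8 * dl \<le> b - a" using dl1(1) by simp
  have "a1 + 2 * dl = (a + b + 4 * dl) / 2" unfolding a1_def by (simp add: field_simps)
  also have "\<dots> < b" using h8 ab by (simp add: field_simps)
  finally have in3: "a1 + 2 * dl < b" .
  have r1: "cmod (pparam n a1 - P) = rho" using H in1 by simp
  have r2: "cmod (pparam n (a1 + dl) - P) = rho" using H in1 dl0 in3 by simp
  have r3: "cmod (pparam n (a1 + 2 * dl) - P) = rho" using H in1 dl0 in3 by simp
  define u where "u = pparam n a1 - P"
  define v where "v = pparam n (a1 + 2 * dl) - P"
  have huv: "(u + v) / 2 = pparam n (a1 + dl) - P"
    unfolding mid u_def v_def by (simp add: field_simps)
  have "(cmod u)\<^sup>2 + (cmod v)\<^sup>2 = 2 * (cmod ((u + v) / 2))\<^sup>2 + (cmod (u - v))\<^sup>2 / 2"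
    by (rule parallelogram)
  then have "(cmod (u - v))\<^sup>2 = 0" unfolding huv using r1 r2 r3 unfolding u_def v_def by simp
  then have "u - v = 0" by simp
  then have "pparam n a1 = pparam n (a1 + 2 * dl)" unfolding u_def v_def by simp
  moreover have "2 * dl < 1"
  proof -
    have "e \<le> 1 / real n" unfolding e_def using k1 nr by (simp add: field_simps)
    also have "1 / real n < 1" using n by simp
    finally show ?thesis using dl1 by simp
  qed
  ultimately show False using pparam_neq[OF n, of "2 * dl" a1] dl0 by simp
qed


lemma K_lemma:
  assumes n: "3 \<le> n" and r: "0 < r" "r \<le> r_crit n"
  shows "0 < Fr n r x" "Fr n r x \<le> 1/2" "D n x (x + Fr n r x) = r"
    "\<And>t. 0 < t \<Longrightarrow> t < Fr n r x \<Longrightarrow> D n x (x + t) < r"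
    "\<And>s. 0 < s \<Longrightarrow> s < Fr n r x \<Longrightarrow> D n (x + s) (x + Fr n r x) < r"
proof -
  have n0: "n > 0" using n by simp
  define S where "S = {t. 0 < t \<and> t < 1 \<and> norm (pparam n x - pparam n (x + t)) = r}"
  define F where "F = Fr n r x"
  have FS: "F = Inf S" unfolding F_def Fr_def S_def ..
  have Smem: "t \<in> S \<longleftrightarrow> 0 < t \<and> t < 1 \<and> D n x (x + t) = r" for t unfolding S_def D_def by simp
  obtain t0 where t0: "0 < t0" "t0 \<le> 1/2" "D n x (x + t0) = r" using hit_exists[OF n r] by blast
  have t0S: "t0 \<in> S" using t0 Smem by simp
  have Sne: "S \<noteq> {}" using t0S by blast
  have bdd: "bdd_below S" by (rule bdd_belowI[where m = 0]) (simp add: Smem)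
  have Ft0: "F \<le> t0" unfolding FS using t0S bdd by (rule cInf_lower)
  then have F12: "F \<le> 1/2" using t0 by simp
  define f where "f = (\<lambda>t. D n x (x + t))"
  have fc: "continuous_on UNIV f" unfolding f_def by (rule cont_f[OF n0])
  have f0: "f 0 = 0" unfolding f_def by (simp add: D_self)
  have "isCont f 0" using fc by (simp add: continuous_on_eq_continuous_at)
  then have "\<forall>e>0. \<exists>d>0. \<forall>t. t \<noteq> 0 \<and> norm (t - 0) < d \<longrightarrow> norm (f t - f 0) < e"
    unfolding isCont_def LIM_eq by simp
  then obtain dl where dl0: "dl > 0" and dlH: "\<forall>t. t \<noteq> 0 \<and> norm (t - 0) < dl \<longrightarrow> norm (f t - f 0) < r"
    using r by blast
  have dl: "dl > 0" "\<And>t. t \<noteq> 0 \<Longrightarrow> \<bar>t\<bar> < dl \<Longrightarrow> \<bar>f t\<bar> < r"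
    using dl0 dlH f0 by auto
  have "dl \<le> F" unfolding FS
  proof (rule cInf_greatest[OF Sne])
    fix t assume "t \<in> S"
    then have "0 < t" "f t = r" using Smem unfolding f_def by auto
    then show "dl \<le> t" using dl(2)[of t] by (cases "t < dl") auto
  qed
  then have F0: "0 < F" using dl by simp
  have "F \<in> closure S" unfolding FS by (rule closure_contains_Inf[OF Sne bdd])
  moreover have "closure S \<subseteq> {t. f t = r}"
  proof (rule closure_minimal)
    show "S \<subseteq> {t. f t = r}" using Smem unfolding f_def by auto
    show "closed {t. f t = r}" by (rule closed_Collect_eq[OF fc]) (rule continuous_on_const)
  qed
  ultimately have fF: "f F = r" by blast
  have K2: "f t < r" if t: "0 < t" "t < F" for t
  proof -
    have "f t \<noteq> r"
    proof
      assume "f t = r"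
      then have "t \<in> S" using Smem t F12 unfolding f_def by auto
      then have "F \<le> t" unfolding FS using bdd by (rule cInf_lower)
      then show False using t by simp
    qed
    moreover have "\<not> r < f t"
    proof
      assume "r < f t"
      have "\<exists>t'. 0 \<le> t' \<and> t' \<le> t \<and> f t' = r"
        by (rule IVT'[of f]) (use \<open>r < f t\<close> r f0 t continuous_on_subset[OF fc subset_UNIV] in auto)
      then obtain t' where t': "0 \<le> t'" "t' \<le> t" "f t' = r" by blast
      then have "t' \<noteq> 0" using f0 r by auto
      then have "t' \<in> S" using Smem t t' F12 unfolding f_def by auto
      then have "F \<le> t'" unfolding FS using bdd by (rule cInf_lower)
      then show False using t t' by simp
    qed
    ultimately show ?thesis by simp
  qed
  have K3a: "D n (x + s) (x + F) \<le> r" if s: "0 < s" "s < F" for s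
  proof -
    define k where "k = (\<lambda>u. D n (x + s) (x + u))"
    have kc: "continuous_on UNIV k" unfolding k_def by (rule cont_k[OF n0])
    have "{s<..<F} \<subseteq> {u. k u \<le> r}"
    proof
      fix u assume u: "u \<in> {s<..<F}"
      have "f u < r" using K2 u s by simp
      then have "D n (x + s) (x + u) \<le> D n x (x + u)"
        using P1[OF n _ r(2), of x u s] u s F12 unfolding f_def by simp
      then show "u \<in> {u. k u \<le> r}" using \<open>f u < r\<close> unfolding k_def f_def by simp
    qed
    then have "closure {s<..<F} \<subseteq> {u. k u \<le> r}"
      by (rule closure_minimal) (rule closed_Collect_le[OF kc continuous_on_const])
    moreover have "F \<in> closure {s<..<F}" using s by simp
    ultimately show ?thesis unfolding k_def by blast
  qed
  have K3: "D n (x + s0) (x + F) < r" if s0: "0 < s0" "s0 < F" for s0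
  proof (rule ccontr)
    assume "\<not> ?thesis"
    then have hs0: "D n (x + s0) (x + F) = r" using K3a[OF s0] by simp
    have "\<exists>s. 0 < s \<and> s < s0 \<and> D n (x + s) (x + F) < r"
    proof (rule ccontr)
      assume "\<not> ?thesis"
      then have "\<forall>y. x < y \<and> y < x + s0 \<longrightarrow> cmod (pparam n y - pparam n (x + F)) = r"
      proof (intro allI impI)
        fix y assume A: "\<not> (\<exists>s. 0 < s \<and> s < s0 \<and> D n (x + s) (x + F) < r)" and y: "x < y \<and> y < x + s0"
        have "D n (x + (y - x)) (x + F) \<le> r" using K3a[of "y - x"] y s0 by simp
        moreover have "\<not> D n (x + (y - x)) (x + F) < r"
        proof
          assume "D n (x + (y - x)) (x + F) < r"
          then have "0 < y - x \<and> y - x < s0 \<and> D n (x + (y - x)) (x + F) < r" using y by simp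
          then show False using A by blast
        qed
        ultimately show "cmod (pparam n y - pparam n (x + F)) = r" unfolding D_def by simp
      qed
      then show False using not_const_dist[OF n, of x "x + s0"] s0 by simp
    qed
    then obtain s where s: "0 < s" "s < s0" "D n (x + s) (x + F) < r" by blast
    have e1: "x + s + (F - s) = x + F" "x + s + (s0 - s) = x + s0" by simp_all
    have "D n (x + s + (s0 - s)) (x + s + (F - s)) \<le> D n (x + s) (x + s + (F - s))"
      using P1[OF n _ r(2), of "x + s" "F - s" "s0 - s"] s s0 F12 unfolding e1 by simp
    then show False unfolding e1 using s hs0 by simp
  qed
  show "0 < Fr n r x" using F0 unfolding F_def .
  show "Fr n r x \<le> 1/2" using F12 unfolding F_def .
  show "D n x (x + Fr n r x) = r" using fF unfolding F_def f_def .
  show "\<And>t. 0 < t \<Longrightarrow> t < Fr n r x \<Longrightarrow> D n x (x + t) < r" using K2 unfolding F_def f_def by simp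
  show "\<And>s. 0 < s \<Longrightarrow> s < Fr n r x \<Longrightarrow> D n (x + s) (x + Fr n r x) < r" using K3 unfolding F_def by simp
qed


lemma g_map_eq: assumes n: "3 \<le> n" and p: "p \<in> polygon n"
  shows "g_map n r p = pparam n (ppos n p + Fr n r (ppos n p))"
proof -
  have e: "pparam n (ppos n p) = p" using pparam_ppos[OF n p] by simp
  show ?thesis unfolding g_map_def Fr_def e ..
qed

lemma Fr_less:
  assumes n: "3 \<le> n" and s: "0 < s" "s < r" and r: "r \<le> r_crit n"
  shows "Fr n s a < Fr n r a"
proof -
  have n0: "n > 0" using n by simp
  have r0: "0 < r" using s by simp
  have sr: "s \<le> r_crit n" using s r by simp
  define F where "F = Fr n r a"
  have F: "0 < F" "D n a (a + F) = r" using K_lemma(1,3)[OF n r0 r, of a] unfolding F_def by auto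
  have "\<exists>t. 0 \<le> t \<and> t \<le> F \<and> D n a (a + t) = s"
    by (rule IVT'[of "\<lambda>t. D n a (a + t)"]) (use F s cont_f[OF n0] in \<open>auto simp: D_self\<close>)
  then obtain t where t: "0 \<le> t" "t \<le> F" "D n a (a + t) = s" by blast
  have "t \<noteq> 0" using t s by (auto simp: D_self)
  have "t \<noteq> F" using t F s by auto
  have "\<not> t < Fr n s a" using K_lemma(4)[OF n s(1) sr, of t a] t \<open>t \<noteq> 0\<close> by auto
  then show ?thesis using t \<open>t \<noteq> F\<close> unfolding F_def by simp
qed

lemma Fr_tendsto:
  assumes n: "3 \<le> n" and rc: "0 < r_crit n"
  shows "((\<lambda>s. Fr n s a) \<longlongrightarrow> Fr n (r_crit n) a) (at_left (r_crit n))"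
proof (rule tendstoI)
  fix e :: real assume e: "0 < e"
  have n0: "n > 0" using n by simp
  define F where "F = Fr n (r_crit n) a"
  have F: "0 < F" using K_lemma(1)[OF n rc order_refl] unfolding F_def by auto
  have up: "Fr n s a < F" if "0 < s" "s < r_crit n" for s
    unfolding F_def using Fr_less[OF n that order_refl] .
  define t1 where "t1 = F - e"
  show "eventually (\<lambda>s. dist (Fr n s a) (Fr n (r_crit n) a) < e) (at_left (r_crit n))"
  proof (cases "t1 \<le> 0")
    case True
    have "eventually (\<lambda>s. s \<in> {0<..<r_crit n}) (at_left (r_crit n))"
      by (rule eventually_at_left_real[OF rc])
    then show ?thesis
    proof (rule eventually_mono)
      fix s assume s: "s \<in> {0<..<r_crit n}"
      have "0 < Fr n s a" using K_lemma(1)[OF n _ less_imp_le, of s a] s by auto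
      then show "dist (Fr n s a) (Fr n (r_crit n) a) < e"
        using up[of s] s True unfolding t1_def F_def dist_real_def by auto
    qed
  next
    case False
    then have t1p: "0 < t1" by simp
    have t1F: "t1 < F" unfolding t1_def using e by simp
    have "\<exists>tm\<in>{0..t1}. \<forall>y\<in>{0..t1}. D n a (a + y) \<le> D n a (a + tm)"
      by (rule continuous_attains_sup) (use t1p cont_f[OF n0] in auto)
    then obtain tm where tm: "0 \<le> tm" "tm \<le> t1" and tmax: "\<And>y. 0 \<le> y \<Longrightarrow> y \<le> t1 \<Longrightarrow> D n a (a + y) \<le> D n a (a + tm)"
      by auto
    define mv where "mv = D n a (a + tm)"
    have mv: "mv < r_crit n"
    proof (cases "tm = 0")
      case True then show ?thesis unfolding mv_def using rc by (simp add: D_self)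
    next
      case False
      then show ?thesis unfolding mv_def using K_lemma(4)[OF n rc order_refl, of tm a] tm t1F
        unfolding F_def by simp
    qed
    have mv0: "0 \<le> mv" unfolding mv_def by (rule D_nonneg)
    have "eventually (\<lambda>s. s \<in> {mv<..<r_crit n}) (at_left (r_crit n))"
      by (rule eventually_at_left_real[OF mv])
    then show ?thesis
    proof (rule eventually_mono)
      fix s assume s: "s \<in> {mv<..<r_crit n}"
      then have s0: "0 < s" using mv0 by simp
      have K: "0 < Fr n s a" "D n a (a + Fr n s a) = s"
        using K_lemma(1,3)[OF n s0, of a] s by auto
      have "t1 < Fr n s a"
      proof (rule ccontr)
        assume "\<not> ?thesis"
        then have "D n a (a + Fr n s a) \<le> mv" unfolding mv_def using tmax[of "Fr n s a"] K by simp
        then show False using K s by simp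
      qed
      then show "dist (Fr n s a) (Fr n (r_crit n) a) < e"
        using up[of s] s s0 unfolding t1_def F_def dist_real_def by auto
    qed
  qed
qed

lemma g_full_eq:
  assumes n: "3 \<le> n" and p: "p \<in> polygon n" and r: "0 < r" "r \<le> r_crit n"
  shows "g_full n r p = pparam n (ppos n p + Fr n r (ppos n p))"
proof (cases "r < r_crit n")
  case True
  then show ?thesis unfolding g_full_def using g_map_eq[OF n p] by simp
next
  case False
  then have rr: "r = r_crit n" using r by simp
  have n0: "n > 0" using n by simp
  define a where "a = ppos n p"
  have rc: "0 < r_crit n" using r rr by simp
  have "((\<lambda>s. a + Fr n s a) \<longlongrightarrow> a + Fr n (r_crit n) a) (at_left (r_crit n))"
    by (intro tendsto_intros Fr_tendsto[OF n rc])
  then have "((\<lambda>s. pparam n (a + Fr n s a)) \<longlongrightarrow> pparam n (a + Fr n (r_crit n) a)) (at_left (r_crit n))"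
    by (rule isCont_tendsto_compose[OF isCont_pparam[OF n0]])
  moreover have "(\<lambda>s. g_map n s p) = (\<lambda>s. pparam n (a + Fr n s a))"
    using g_map_eq[OF n p] unfolding a_def by simp
  ultimately have "Lim (at_left (r_crit n)) (\<lambda>s. g_map n s p) = pparam n (a + Fr n (r_crit n) a)"
    by (simp add: tendsto_Lim)
  then show ?thesis unfolding g_full_def using False rr a_def by simp
qed

lemma Fr_refl:
  assumes n: "3 \<le> n" and r: "0 < r" "r \<le> r_crit n" and c: "real n * c = of_int m"
  shows "Fr n r (c - x - Fr n r x) = Fr n r x"
proof -
  have n0: "n > 0" using n by simp
  define F where "F = Fr n r x"
  define b where "b = c - x - F"
  have K1: "0 < F" "F \<le> 1/2" "D n x (x + F) = r" using K_lemma(1,2,3)[OF n r, of x] unfolding F_def by auto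
  have K3: "\<And>s. 0 < s \<Longrightarrow> s < F \<Longrightarrow> D n (x + s) (x + F) < r" using K_lemma(5)[OF n r, of _ x] unfolding F_def by simp
  have Db: "D n b (b + t) = D n (x + F) (x + F - t)" for t
  proof -
    have e1: "b = c - (x + F)" "b + t = c - (x + F - t)" unfolding b_def by simp_all
    have "D n b (b + t) = D n (c - (x + F)) (c - (x + F - t))" unfolding e1(2) unfolding e1(1) ..
    also have "\<dots> = D n (x + F) (x + F - t)" by (rule D_refl[OF n0 c])
    finally show ?thesis .
  qed
  have "Inf {t. 0 < t \<and> t < 1 \<and> norm (pparam n b - pparam n (b + t)) = r} = F"
  proof (rule cInf_eq_minimum)
    have "D n b (b + F) = r" unfolding Db using K1 by (simp add: D_sym)
    then show "F \<in> {t. 0 < t \<and> t < 1 \<and> norm (pparam n b - pparam n (b + t)) = r}"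
      using K1 unfolding D_def by simp
  next
    fix t assume "t \<in> {t. 0 < t \<and> t < 1 \<and> norm (pparam n b - pparam n (b + t)) = r}"
    then have t: "0 < t" "D n b (b + t) = r" unfolding D_def by auto
    show "F \<le> t"
    proof (rule ccontr)
      assume "\<not> F \<le> t"
      then have "D n (x + (F - t)) (x + F) < r" using K3[of "F - t"] t by simp
      moreover have "D n (x + (F - t)) (x + F) = D n b (b + t)" unfolding Db
        by (simp add: D_sym algebra_simps)
      ultimately show False using t by simp
    qed
  qed
  then have "Fr n r b = F" unfolding Fr_def by simp
  then show ?thesis by (simp add: b_def F_def)
qed


lemma Fr_periodic: assumes n0: "n > 0" shows "Fr n r (y + of_int k) = Fr n r y"
proof -
  have e1: "pparam n (y + of_int k) = pparam n y" by (rule pparam_periodic[OF n0])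
  have e2: "pparam n (y + of_int k + t) = pparam n (y + t)" for t
    using pparam_periodic[OF n0, of "y + t" k] by (simp add: algebra_simps)
  show ?thesis unfolding Fr_def e1 e2 ..
qed

lemma Fr_frac: assumes n0: "n > 0" shows "Fr n r (frac y) = Fr n r y"
  using Fr_periodic[OF n0, of r y "- \<lfloor>y\<rfloor>"] by (simp add: frac_def)

definition nxt :: "nat \<Rightarrow> real \<Rightarrow> real \<Rightarrow> real" where
  "nxt n r y = frac (y + Fr n r y)"

lemma frac_frac_sub: "frac (c - frac z) = frac (c - z)"
proof -
  have e: "c - frac z = (c - z) + of_int \<lfloor>z\<rfloor>" by (simp add: frac_def)
  show ?thesis by (simp only: e frac_shift)
qed

lemma frac_add_frac: "frac (frac a + b) = frac (a + b)"
proof -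
  have "frac a + b = (a + b) + of_int (- \<lfloor>a\<rfloor>)" by (simp add: frac_def)
  then show ?thesis by (simp only: frac_shift)
qed

lemma frac_frac: "frac (frac z) = frac z" by (simp add: frac_eq frac_lt_1)

lemma nxt_refl:
  assumes n: "3 \<le> n" and r: "0 < r" "r \<le> r_crit n" and c: "real n * c = of_int m"
  shows "nxt n r (frac (c - nxt n r y)) = frac (c - y)"
proof -
  have n0: "n > 0" using n by simp
  define b where "b = c - y - Fr n r y"
  have hb: "frac (c - nxt n r y) = frac b" unfolding nxt_def b_def frac_frac_sub by (simp add: algebra_simps)
  have "nxt n r (frac (c - nxt n r y)) = nxt n r (frac b)" by (simp only: hb)
  also have "\<dots> = frac (frac b + Fr n r b)" unfolding nxt_def Fr_frac[OF n0] ..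
  also have "\<dots> = frac (b + Fr n r b)" by (rule frac_add_frac)
  also have "Fr n r b = Fr n r y" unfolding b_def by (rule Fr_refl[OF n r c])
  also have "b + Fr n r y = c - y" unfolding b_def by simp
  finally show ?thesis .
qed

lemma int_strict_between: assumes "(-1::real) < of_int k" "of_int k < (1::real)" shows "k = 0"
proof -
  have "-1 < k" "k < 1" using assms by linarith+
  then show ?thesis by simp
qed

lemma frac_neg_inj: fixes y y' :: real assumes "0 \<le> y" "y < 1" "0 \<le> y'" "y' < 1" "frac (- y) = frac (- y')"
  shows "y = y'"
proof -
  define w where "w = \<lfloor>- y\<rfloor> - \<lfloor>- y'\<rfloor>"
  have hw: "y' - y = of_int w" using assms(5) unfolding w_def by (simp add: frac_def)
  have h1: "-1 < (of_int w :: real)" using hw assms(1-4) by linarith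
  have h2: "(of_int w :: real) < 1" using hw assms(1-4) by linarith
  have "w = 0" by (rule int_strict_between[OF h1 h2])
  then show ?thesis using hw by simp
qed

lemma nxt_inj:
  assumes n: "3 \<le> n" and r: "0 < r" "r \<le> r_crit n"
    and y: "0 \<le> y" "y < 1" and y': "0 \<le> y'" "y' < 1" and eq: "nxt n r y = nxt n r y'"
  shows "y = y'"
proof -
  have c: "real n * 0 = of_int 0" by simp
  have "frac (0 - y) = frac (0 - y')"
    using nxt_refl[OF n r c, of y] nxt_refl[OF n r c, of y'] eq by simp
  then show ?thesis using frac_neg_inj[OF y y'] by simp
qed

lemma sym_ind:
  assumes n: "3 \<le> n" and r: "0 < r" "r \<le> r_crit n" and c: "real n * c = of_int m"
    and hX: "\<And>k. X (k + 1) = nxt n r (X k)" and hr: "\<And>k. 0 \<le> X k \<and> X k < 1"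
    and fix0: "X i0 = frac (c - X i0)"
  shows "X (i0 - int j) = frac (c - X (i0 + int j))"
proof (induction j)
  case 0
  then show ?case using fix0 by simp
next
  case (Suc j)
  have "nxt n r (frac (c - X (i0 + int j + 1))) = frac (c - X (i0 + int j))"
    unfolding hX by (rule nxt_refl[OF n r c])
  also have "\<dots> = X (i0 - int j)" using Suc by simp
  also have "\<dots> = nxt n r (X (i0 - int j - 1))" using hX[of "i0 - int j - 1"] by simp
  finally have "frac (c - X (i0 + int j + 1)) = X (i0 - int j - 1)"
    using nxt_inj[OF n r] hr[of "i0 - int j - 1"] by (simp add: frac_lt_1)
  then show ?case by (simp add: algebra_simps)
qed

lemma sym_all:
  fixes X :: "int \<Rightarrow> real" and i0 k :: int
  assumes n: "3 \<le> n" and r: "0 < r" "r \<le> r_crit n" and c: "real n * c = of_int m"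
    and hX: "\<And>k. X (k + 1) = nxt n r (X k)" and hr: "\<And>k. 0 \<le> X k \<and> X k < 1"
    and fix0: "X i0 = frac (c - X i0)"
  shows "X (i0 - k) = frac (c - X (i0 + k))"
proof (cases "0 \<le> k")
  case True
  then show ?thesis using sym_ind[OF n r c hX hr fix0, of "nat k"] by simp
next
  case False
  define j where "j = nat (- k)"
  have k: "k = - int j" unfolding j_def using False by simp
  have "X (i0 - int j) = frac (c - X (i0 + int j))" by (rule sym_ind[OF n r c hX hr fix0])
  then have "frac (c - X (i0 - int j)) = frac (X (i0 + int j))" by (simp add: frac_frac_sub)
  also have "\<dots> = X (i0 + int j)" using hr[of "i0 + int j"] by (simp add: frac_eq)
  finally show ?thesis unfolding k by simp
qed

lemma pvert_as_pparam: assumes n0: "n > 0" shows "pvert n k = pparam n (of_int k / real n)"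
proof -
  have "pparam n (of_int k / real n) = Q n (of_int k + 0)" unfolding pparam_Q[OF n0] using n0 by simp
  also have "\<dots> = pvert n k" by (subst Q_int_add) auto
  finally show ?thesis by simp
qed

lemma mid_as_pparam: assumes n0: "n > 0"
  shows "(pvert n k + pvert n (k + 1)) / 2 = pparam n ((of_int k + 1/2) / real n)"
proof -
  have "pparam n ((of_int k + 1/2) / real n) = Q n (of_int k + 1/2)" unfolding pparam_Q[OF n0] using n0 by simp
  also have "\<dots> = complex_of_real (1/2) * pvert n k + complex_of_real (1/2) * pvert n (k + 1)"
    using Q_int_add[of "1/2" n k] by simp
  finally show ?thesis by (simp add: field_simps)
qed

lemma not_half_int: "of_int w \<noteq> (1/2::real)"
proof
  assume "of_int w = (1/2::real)"
  then have "0 < w" "w < 1" by linarith+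
  then show False by simp
qed


theorem lemma5p8:
  fixes l n :: nat and r :: real and u :: "nat \<Rightarrow> complex"
  assumes "l \<ge> 1" and "n \<ge> 4 * l + 2"
    and "is_star n l r u"
  shows "\<not> ((\<exists>i < 2*l+1. is_vertex n (u i)) \<and> (\<exists>j < 2*l+1. is_edge_midpoint n (u j)))"
proof
  assume H: "(\<exists>i < 2*l+1. is_vertex n (u i)) \<and> (\<exists>j < 2*l+1. is_edge_midpoint n (u j))"
  define N where "N = 2 * l + 1"
  have N0: "0 < N" unfolding N_def by simp
  have n: "3 \<le> n" using assms(1,2) by simp
  have n0: "n > 0" using n by simp
  obtain i0 kv where i0: "i0 < N" "u i0 = pvert n kv" using H unfolding N_def is_vertex_def by blast
  obtain j0 km where j0: "j0 < N" "u j0 = (pvert n km + pvert n (km + 1)) / 2"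
    using H unfolding N_def is_edge_midpoint_def by blast
  have r: "0 < r" "r \<le> r_crit n" using assms(3) unfolding is_star_def by auto
  have st: "\<And>i. i < N \<Longrightarrow> u i \<in> polygon n \<and> u ((i + 1) mod N) = g_full n r (u i)"
    using assms(3) unfolding is_star_def N_def by auto
  define X where "X = (\<lambda>k::int. ppos n (u (nat (k mod int N))))"
  have idx: "nat (k mod int N) < N" for k
    using N0 by (simp add: nat_less_iff)
  have hr: "0 \<le> X k \<and> X k < 1" for k
    using pparam_ppos(2,3)[OF n, of "u (nat (k mod int N))"] st[OF idx[of k]] unfolding X_def by simp
  have hX: "X (k + 1) = nxt n r (X k)" for k
  proof -
    define i where "i = nat (k mod int N)"
    have i: "i < N" unfolding i_def by (rule idx)
    have "int ((i + 1) mod N) = (int i + 1) mod int N" by (simp only: of_nat_mod of_nat_add of_nat_1)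
    also have "int i = k mod int N" unfolding i_def using N0 by simp
    also have "(k mod int N + 1) mod int N = (k + 1) mod int N" by (rule mod_add_left_eq)
    finally have "nat ((k + 1) mod int N) = (i + 1) mod N" by (metis nat_int)
    then have "X (k + 1) = ppos n (u ((i + 1) mod N))" unfolding X_def by simp
    also have "\<dots> = ppos n (g_full n r (u i))" using st[OF i] by simp
    also have "\<dots> = ppos n (pparam n (ppos n (u i) + Fr n r (ppos n (u i))))"
      using g_full_eq[OF n _ r] st[OF i] by simp
    also have "\<dots> = nxt n r (X k)" unfolding ppos_pparam[OF n] nxt_def X_def i_def by simp
    finally show ?thesis .
  qed
  have hper: "X (k + int N * m) = X k" for k m unfolding X_def by simp
  have Xi0: "X (int i0) = frac (of_int kv / real n)"
  proof -
    have "nat (int i0 mod int N) = i0" using i0 by simp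
    then have "X (int i0) = ppos n (u i0)" unfolding X_def by simp
    then show ?thesis unfolding i0(2) pvert_as_pparam[OF n0] ppos_pparam[OF n] .
  qed
  have Xj0: "X (int j0) = frac ((of_int km + 1/2) / real n)"
  proof -
    have "nat (int j0 mod int N) = j0" using j0 by simp
    then have "X (int j0) = ppos n (u j0)" unfolding X_def by simp
    then show ?thesis unfolding j0(2) mid_as_pparam[OF n0] ppos_pparam[OF n] .
  qed
  define xv where "xv = X (int i0)"
  define xm where "xm = X (int j0)"
  define zv where "zv = kv - int n * \<lfloor>of_int kv / real n\<rfloor>"
  define zm where "zm = 2 * km + 1 - 2 * int n * \<lfloor>(of_int km + 1/2) / real n\<rfloor>"
  have nxv: "real n * xv = of_int zv" unfolding xv_def Xi0 zv_def frac_def using n0 by (simp add: field_simps)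
  have nxm: "real n * (2 * xm) = of_int zm" unfolding xm_def Xj0 zm_def frac_def using n0 by (simp add: field_simps)
  define cv where "cv = 2 * xv"
  define cm where "cm = 2 * xm"
  have ncv: "real n * cv = of_int (2 * zv)" unfolding cv_def using nxv by simp
  have ncm: "real n * cm = of_int zm" unfolding cm_def using nxm by simp
  have fixv: "X (int i0) = frac (cv - X (int i0))"
    unfolding cv_def xv_def using hr[of "int i0"] by (simp add: frac_eq)
  have fixm: "X (int j0) = frac (cm - X (int j0))"
    unfolding cm_def xm_def using hr[of "int j0"] by (simp add: frac_eq)
  have symv: "X (int i0 - k) = frac (cv - X (int i0 + k))" for k
    by (rule sym_all[OF n r ncv hX hr fixv])
  have symm: "X (int j0 - k) = frac (cm - X (int j0 + k))" for k
    by (rule sym_all[OF n r ncm hX hr fixm])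
  define dt where "dt = int j0 - int i0"
  define e where "e = cm - cv"
  have comp: "X (int i0 + k + 2 * dt) = frac (X (int i0 + k) + e)" for k
  proof -
    have "X (int i0 + k + 2 * dt) = X (int j0 + (dt + k))" unfolding dt_def by (simp add: algebra_simps)
    also have "\<dots> = frac (cm - X (int j0 - (dt + k)))"
    proof -
      have e1: "int j0 - (- (dt + k)) = int j0 + (dt + k)" "int j0 + (- (dt + k)) = int j0 - (dt + k)" by simp_all
      show ?thesis using symm[of "- (dt + k)"] unfolding e1 .
    qed
    also have "int j0 - (dt + k) = int i0 - k" unfolding dt_def by simp
    also have "X (int i0 - k) = frac (cv - X (int i0 + k))" by (rule symv)
    also have "frac (cm - frac (cv - X (int i0 + k))) = frac (X (int i0 + k) + e)"
      unfolding frac_frac_sub e_def by (simp add: algebra_simps)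
    finally show ?thesis .
  qed
  have iter: "X (int i0 + 2 * dt * int s) = frac (xv + real s * e)" for s
  proof (induction s)
    case 0
    then show ?case unfolding xv_def using hr[of "int i0"] by (simp add: frac_eq)
  next
    case (Suc s)
    have "X (int i0 + 2 * dt * int (Suc s)) = X (int i0 + 2 * dt * int s + 2 * dt)"
      by (simp add: algebra_simps)
    also have "\<dots> = frac (X (int i0 + 2 * dt * int s) + e)" by (rule comp)
    also have "\<dots> = frac (frac (xv + real s * e) + e)" using Suc by simp
    also have "\<dots> = frac (xv + real (Suc s) * e)" by (simp add: frac_add_frac algebra_simps)
    finally show ?case .
  qed
  have "int i0 + 2 * dt * int (l + 1) = int j0 + int N * dt" unfolding dt_def N_def by (simp add: algebra_simps)
  then have "xm = frac (xv + real (l + 1) * e)" using iter[of "l + 1"] hper[of "int j0" dt] unfolding xm_def by simp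
  then have hxm: "xm = (xv + real (l + 1) * e) - of_int \<lfloor>xv + real (l + 1) * e\<rfloor>" unfolding frac_def .
  have "real n * xm = real n * ((xv + real (l + 1) * e) - of_int \<lfloor>xv + real (l + 1) * e\<rfloor>)"
    by (subst hxm) (rule refl)
  also have "\<dots> = real n * xv + real (l + 1) * (real n * e) - real n * of_int \<lfloor>xv + real (l + 1) * e\<rfloor>"
    by (simp only: algebra_simps)
  also have "real n * e = of_int (zm - 2 * zv)" unfolding e_def using ncm ncv by (simp add: algebra_simps)
  finally have "real n * xm = of_int (zv + int (l + 1) * (zm - 2 * zv) - int n * \<lfloor>xv + real (l + 1) * e\<rfloor>)"
    using nxv by simp
  moreover have "real n * xm = of_int km + 1/2 - of_int (int n * \<lfloor>(of_int km + 1/2) / real n\<rfloor>)"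
    unfolding xm_def Xj0 frac_def using n0 by (simp add: field_simps)
  ultimately have "of_int (zv + int (l + 1) * (zm - 2 * zv) - int n * \<lfloor>xv + real (l + 1) * e\<rfloor>
      - km + int n * \<lfloor>(of_int km + 1/2) / real n\<rfloor>) = (1/2 :: real)"
    by simp
  then show False using not_half_int by blast
qed


end
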